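(* Consider a single positioning infrastructure with $N_{\text{anc}}$ anchors providing ranging information, of which $N_{\text{adv}}$ are manipulated by an uncoordinated attacker, and let $N_{\text{min}}$ be the minimum number of anchors required for positioning. Suppose that $N_{\text{anc}}-N_{\text{adv}}>N_{\text{min}}$. Then the true position $\mathbf{p}_{\text{usr}}(t)$ can be recovered (the spoofed subset position estimates can be excluded, leaving benign estimates equal to $\mathbf{p}_{\text{usr}}(t)$).
   Context: Idealized model of subset-based integrity monitoring: a platform at unknown true position $\mathbf{p}_{\text{usr}}(t)\in\mathbb{R}^3$ receives ranging measurements from anchors with known positions (e.g., GNSS satellites, for which $N_{\text{min}}=4$). For every subset of anchors of size at least $N_{\text{min}}$, a position estimate is computed by multilateration. Positioning noise and uncertainties are taken to be negligible (zero) while attacker-induced deviations are preserved, and the anchor geometry is good, so every subset consisting only of benign (non-manipulated) measurements of size at least $N_{\text{min}}$ yields exactly $\mathbf{p}_{\text{usr}}(t)$. "Uncoordinated spoofing" means the manipulated ranging values are chosen independently (potentially randomly), so subset estimates involving manipulated measurements are random positions, almost surely inconsistent with the benign position and with each other. $C(n,k)$ denotes the binomial coefficient. *)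

theory Defs
  imports "HOL-Analysis.Analysis"
begin

definition usable_subsets :: "'a set \<Rightarrow> nat \<Rightarrow> 'a set set" where
  "usable_subsets A Nmin = {S. S \<subseteq> A \<and> Nmin \<le> card S}"

text \<open>Idealized, noise-free subset-based model under uncoordinated spoofing:
  M is the set of manipulated anchors, p the true position, est S the
  multilateration estimate from subset S.
  (i) every benign usable subset yields exactly p;
  (ii) every usable subset containing a manipulated anchor yields a position
       inconsistent with p and with the estimate of every other usable subset.\<close>
definition uncoordinated_spoofing_model ::
  "'a set \<Rightarrow> nat \<Rightarrow> 'a set \<Rightarrow> real^3 \<Rightarrow> ('a set \<Rightarrow> real^3) \<Rightarrow> bool" where
  "uncoordinated_spoofing_model A Nmin M p est \<longleftrightarrow>
     (\<forall>S\<in>usable_subsets A Nmin. S \<inter> M = {} \<longrightarrow> est S = p) \<and>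
     (\<forall>S\<in>usable_subsets A Nmin. S \<inter> M \<noteq> {} \<longrightarrow> est S \<noteq> p) \<and>
     (\<forall>S\<in>usable_subsets A Nmin. \<forall>S'\<in>usable_subsets A Nmin.
        S \<inter> M \<noteq> {} \<longrightarrow> S' \<noteq> S \<longrightarrow> est S \<noteq> est S')"

end

theory Submission
  imports Defs
begin

theorem lemma1:
  fixes A :: "'a set" and N_anc N_adv N_min :: nat
  assumes "finite A"
    and "card A = N_anc"
    and "N_anc - N_adv > N_min"
  shows "\<exists>recover :: ('a set \<Rightarrow> real^3) \<Rightarrow> real^3.
           \<forall>M p est. M \<subseteq> A \<and> card M = N_adv \<and>
                     uncoordinated_spoofing_model A N_min M p est
                     \<longrightarrow> recover est = p"
proof -
  let ?U = "usable_subsets A N_min"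
  let ?R = "\<lambda>est. SOME v. \<exists>S\<in>?U. \<exists>S'\<in>?U. S \<noteq> S' \<and> est S = v \<and> est S' = v"
  show ?thesis
  proof (rule exI[of _ ?R], intro allI impI, elim conjE)
    fix M p est
    assume MA: "M \<subseteq> A" and cM: "card M = N_adv"
      and mo: "uncoordinated_spoofing_model A N_min M p est"
    have c1: "\<forall>S\<in>?U. S \<inter> M = {} \<longrightarrow> est S = p"
      and c3: "\<forall>S\<in>?U. \<forall>S'\<in>?U. S \<inter> M \<noteq> {} \<longrightarrow> S' \<noteq> S \<longrightarrow> est S \<noteq> est S'"
      using mo unfolding uncoordinated_spoofing_model_def by blast+
    let ?B = "A - M"
    have fB: "finite ?B" using assms(1) by simp
    have cB: "card ?B = N_anc - N_adv"
      using card_Diff_subset[OF finite_subset[OF MA assms(1)] MA] assms(2) cM by simp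
    have "?B \<noteq> {}"
    proof
      assume "?B = {}"
      hence "card ?B = 0" by (simp only: card.empty)
      with cB assms(3) show False by linarith
    qed
    then obtain x where x: "x \<in> ?B" by blast
    have cB': "card (?B - {x}) = card ?B - 1" using x fB by simp
    have k1: "N_min \<le> card ?B" using cB assms(3) by linarith
    have k2: "N_min \<le> card (?B - {x})" using cB cB' assms(3) by linarith
    have U1: "?B \<in> ?U" unfolding usable_subsets_def using k1 by (simp add: Diff_subset)
    have sub2: "?B - {x} \<subseteq> A" by (rule subset_trans[OF Diff_subset Diff_subset])
    have U2: "?B - {x} \<in> ?U" unfolding usable_subsets_def using k2 sub2 by simp
    have neq: "?B \<noteq> ?B - {x}"
    proof
      assume eq: "?B = ?B - {x}"
      have "x \<in> ?B - {x}" using x by (subst eq[symmetric])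
      thus False by simp
    qed
    have d1: "?B \<inter> M = {}" by (subst Int_commute, rule Diff_disjoint)
    have d2: "(?B - {x}) \<inter> M = {}" using d1 by auto
    have e1: "est ?B = p" using mp[OF bspec[OF c1 U1] d1] .
    have e2: "est (?B - {x}) = p" using mp[OF bspec[OF c1 U2] d2] .
    have ex: "\<exists>S\<in>?U. \<exists>S'\<in>?U. S \<noteq> S' \<and> est S = p \<and> est S' = p"
    proof (rule bexI[OF _ U1])
      show "\<exists>S'\<in>?U. ?B \<noteq> S' \<and> est ?B = p \<and> est S' = p"
        by (rule bexI[OF _ U2], intro conjI neq e1 e2)
    qed
    have uniq: "v = p" if "\<exists>S\<in>?U. \<exists>S'\<in>?U. S \<noteq> S' \<and> est S = v \<and> est S' = v" for v
    proof -
      from that obtain S S' where S: "S \<in> ?U" "S' \<in> ?U" "S \<noteq> S'" "est S = v" "est S' = v" by blast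
      have "S \<inter> M = {}"
      proof (rule ccontr)
        assume a: "S \<inter> M \<noteq> {}"
        have "est S \<noteq> est S'" using mp[OF mp[OF bspec[OF bspec[OF c3 S(1)] S(2)] a]] S(3) by metis
        thus False using S(4,5) by simp
      qed
      hence "est S = p" using mp[OF bspec[OF c1 S(1)]] by simp
      thus ?thesis using S(4) by simp
    qed
    show "?R est = p"
      by (rule someI2[of _ p], rule ex, rule uniq)
  qed
qed

end
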